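(* Let $P\subset\mathbb{R}^d$ be a finite dataset with $|P|=n$, let $s$ be the number of compute nodes, $t<s$, $\delta>0$, and let $A\in\{0,1\}^{s\times n}$ (columns indexed by the points of $P$) satisfy the straggler-resilience property with parameter $\delta$. For $i\in[s]$ let $P_i$ be the set of points $\mathbf{p}\in P$ whose column has a $1$ in row $i$. Let $\mathcal{R}\subseteq[s]$ with $|\mathcal{R}|\ge s-t$ and let $\mathbf{b}=(b_i)_{i\in\mathcal{R}}$ be a corresponding non-negative recovery vector. For each $i\in\mathcal{R}$ let $Y_i\subset\mathbb{R}^d$ be an optimal set of $k$ $k$-median centers for $P_i$ (i.e. $Y_i$ minimizes $\mathrm{cost}(P_i,\cdot)$ over all sets of $k$ points of $\mathbb{R}^d$), and define $w_i:Y_i\to\mathbb{R}$ by $w_i(\mathbf{c})=|\mathrm{cluster}(\mathbf{c},P_i)|$. Let $Y=\bigcup_{i\in\mathcal{R}}Y_i$ with weight $w(\mathbf{c})=\sum_{i\in\mathcal{R}:\,\mathbf{c}\in Y_i}b_i\,w_i(\mathbf{c})$. Then for every set $C\subset\mathbb{R}^d$ of $k$ centers, $$\mathrm{cost}(P,C)-\sum_{i\in\mathcal{R}}b_i\,\mathrm{cost}(P_i,Y_i)\le\mathrm{cost}(Y,C,w)\le 2(1+\delta)\,\mathrm{cost}(P,C).$$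
   Context: $d(\mathbf{x},C)=\min_{\mathbf{c}\in C}\|\mathbf{x}-\mathbf{c}\|_2$. The $k$-median cost is $\mathrm{cost}(Q,C)=\sum_{\mathbf{q}\in Q}d(\mathbf{q},C)$, and for a weighted set $(Q,w)$, $\mathrm{cost}(Q,C,w)=\sum_{\mathbf{q}\in Q}w(\mathbf{q})d(\mathbf{q},C)$. For a center set $Y_i$, $\mathrm{cluster}(\mathbf{c},P_i)$ is the set of points of $P_i$ whose closest center in $Y_i$ is $\mathbf{c}$ (ties broken arbitrarily so that the clusters partition $P_i$). Straggler-resilience property with parameter $\delta$: for every $\mathcal{R}\subseteq[s]$ with $|\mathcal{R}|\ge s-t$, letting $A_{\mathcal{R}}$ be the rows of $A$ indexed by $\mathcal{R}$, there is a vector $\mathbf{b}\in\mathbb{R}^{|\mathcal{R}|}$ with non-negative entries (a recovery vector) such that $\mathbf{b}^TA_{\mathcal{R}}=(a_1,\ldots,a_n)$ with $1\le a_j\le 1+\delta$ for all $j$. *)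

theory Defs
  imports "HOL-Analysis.Analysis"
begin

text \<open>Distance from a point to a (finite, nonempty) set of centers: d(x,C) = min over c in C of the
  Euclidean distance. We use the library's infdist, which is this minimum for finite nonempty C.\<close>

definition kmed_cost :: "('a::metric_space) set \<Rightarrow> 'a set \<Rightarrow> real" where
  "kmed_cost Q C = (\<Sum>q\<in>Q. infdist q C)"

definition kmed_wcost :: "('a::metric_space) set \<Rightarrow> 'a set \<Rightarrow> ('a \<Rightarrow> real) \<Rightarrow> real" where
  "kmed_wcost Q C w = (\<Sum>q\<in>Q. w q * infdist q C)"

definition straggler_resilient ::
  "nat \<Rightarrow> nat \<Rightarrow> real \<Rightarrow> 'p set \<Rightarrow> (nat \<Rightarrow> 'p \<Rightarrow> real) \<Rightarrow> bool" where
  "straggler_resilient s t \<delta> P A \<longleftrightarrow>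
     (\<forall>R. R \<subseteq> {..<s} \<and> card R \<ge> s - t \<longrightarrow>
        (\<exists>b::nat \<Rightarrow> real. (\<forall>i\<in>R. b i \<ge> 0) \<and>
           (\<forall>p\<in>P. 1 \<le> (\<Sum>i\<in>R. b i * A i p) \<and> (\<Sum>i\<in>R. b i * A i p) \<le> 1 + \<delta>)))"

end

theory Submission
  imports Defs
begin

lemma group_count:
  fixes S :: "'a set" and T :: "'b set" and g :: "'a \<Rightarrow> 'b" and f :: "'b \<Rightarrow> real"
  assumes "finite S" "finite T" "g ` S \<subseteq> T"
  shows "(\<Sum>p\<in>S. f (g p)) = (\<Sum>c\<in>T. real (card {p\<in>S. g p = c}) * f c)"
proof -
  have "(\<Sum>p\<in>S. f (g p)) = (\<Sum>c\<in>T. \<Sum>p\<in>{x. x \<in> S \<and> g x = c}. f (g p))"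
    using sum.group[OF assms, of "\<lambda>p. f (g p)"] by simp
  also have "\<dots> = (\<Sum>c\<in>T. real (card {p\<in>S. g p = c}) * f c)"
  proof (rule sum.cong[OF refl])
    fix c assume "c \<in> T"
    have "(\<Sum>p\<in>{x. x \<in> S \<and> g x = c}. f (g p)) = (\<Sum>p\<in>{x. x \<in> S \<and> g x = c}. f c)"
      by (rule sum.cong) auto
    then show "(\<Sum>p\<in>{x. x \<in> S \<and> g x = c}. f (g p)) = real (card {p\<in>S. g p = c}) * f c"
      by simp
  qed
  finally show ?thesis .
qed

lemma sum_restrict01:
  fixes P :: "'a set" and a :: "'a \<Rightarrow> real"
  assumes "finite P" "\<forall>p\<in>P. a p = 0 \<or> a p = 1"
  shows "(\<Sum>p\<in>{p\<in>P. a p = 1}. g p) = (\<Sum>p\<in>P. a p * g p)"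
proof -
  have "(\<Sum>p\<in>P. a p * g p) = (\<Sum>p\<in>P. if a p = 1 then g p else 0)"
    using assms(2) by (intro sum.cong) auto
  also have "\<dots> = (\<Sum>p\<in>{p\<in>P. a p = 1}. g p)"
    using assms(1) by (simp add: sum.inter_filter)
  finally show ?thesis by simp
qed

theorem lemma2:
  fixes P :: "(real ^ 'd) set"
    and s t k :: nat
    and \<delta> :: real
    and A :: "nat \<Rightarrow> real ^ 'd \<Rightarrow> real"
    and R :: "nat set"
    and b :: "nat \<Rightarrow> real"
    and Y :: "nat \<Rightarrow> (real ^ 'd) set"
    and \<sigma> :: "nat \<Rightarrow> real ^ 'd \<Rightarrow> real ^ 'd"
    and C :: "(real ^ 'd) set"
  assumes finP: "finite P"
    and ts: "t < s"
    and dpos: "\<delta> > 0"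
    and k1: "k \<ge> 1"
    and A01: "\<forall>i<s. \<forall>p\<in>P. A i p = 0 \<or> A i p = 1"
    and SR: "straggler_resilient s t \<delta> P A"
    and Rsub: "R \<subseteq> {..<s}"
    and Rcard: "card R \<ge> s - t"
    and bnn: "\<forall>i\<in>R. b i \<ge> 0"
    and brec: "\<forall>p\<in>P. 1 \<le> (\<Sum>i\<in>R. b i * A i p) \<and> (\<Sum>i\<in>R. b i * A i p) \<le> 1 + \<delta>"
    and Ycard: "\<forall>i\<in>R. card (Y i) = k"
    and Yopt: "\<forall>i\<in>R. \<forall>C'. card C' = k \<longrightarrow>
                 kmed_cost {p\<in>P. A i p = 1} (Y i) \<le> kmed_cost {p\<in>P. A i p = 1} C'"
    and \<sigma>: "\<forall>i\<in>R. \<forall>p\<in>{p\<in>P. A i p = 1}.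
                 \<sigma> i p \<in> Y i \<and> dist p (\<sigma> i p) = infdist p (Y i)"
    and Ccard: "card C = k"
  shows "kmed_cost P C - (\<Sum>i\<in>R. b i * kmed_cost {p\<in>P. A i p = 1} (Y i))
           \<le> kmed_wcost (\<Union>i\<in>R. Y i) C
                (\<lambda>c. \<Sum>i\<in>{i\<in>R. c \<in> Y i}. b i * real (card {p\<in>P. A i p = 1 \<and> \<sigma> i p = c}))
       \<and> kmed_wcost (\<Union>i\<in>R. Y i) C
                (\<lambda>c. \<Sum>i\<in>{i\<in>R. c \<in> Y i}. b i * real (card {p\<in>P. A i p = 1 \<and> \<sigma> i p = c}))
           \<le> 2 * (1 + \<delta>) * kmed_cost P C"
proof -
  define Q where "Q i = {p\<in>P. A i p = 1}" for i
  define w where "w c = (\<Sum>i\<in>{i\<in>R. c \<in> Y i}. b i * real (card {p\<in>P. A i p = 1 \<and> \<sigma> i p = c}))" for c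
  have finR: "finite R" using Rsub finite_subset by blast
  have finY: "\<And>i. i \<in> R \<Longrightarrow> finite (Y i)" using Ycard k1 card.infinite by fastforce
  have finU: "finite (\<Union>i\<in>R. Y i)" using finR finY by blast
  have finQ: "\<And>i. finite (Q i)" using finP unfolding Q_def by simp
  have A01': "\<And>i. i \<in> R \<Longrightarrow> \<forall>p\<in>P. A i p = 0 \<or> A i p = 1" using A01 Rsub by blast
  have key: "kmed_wcost (\<Union>i\<in>R. Y i) C w = (\<Sum>i\<in>R. b i * (\<Sum>p\<in>Q i. infdist (\<sigma> i p) C))"
  proof -
    have "kmed_wcost (\<Union>i\<in>R. Y i) C w
        = (\<Sum>c\<in>(\<Union>i\<in>R. Y i). \<Sum>i\<in>R. if c \<in> Y i then b i * real (card {p\<in>Q i. \<sigma> i p = c}) * infdist c C else 0)"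
      unfolding kmed_wcost_def w_def
    proof (rule sum.cong[OF refl])
      fix c
      have "(\<Sum>i\<in>{i\<in>R. c \<in> Y i}. b i * real (card {p\<in>P. A i p = 1 \<and> \<sigma> i p = c})) * infdist c C
          = (\<Sum>i\<in>{i\<in>R. c \<in> Y i}. b i * real (card {p\<in>Q i. \<sigma> i p = c}) * infdist c C)"
        unfolding Q_def sum_distrib_right by (simp add: conj_assoc)
      also have "\<dots> = (\<Sum>i\<in>R. if c \<in> Y i then b i * real (card {p\<in>Q i. \<sigma> i p = c}) * infdist c C else 0)"
        using finR by (simp add: sum.inter_filter)
      finally show "(\<Sum>i\<in>{i\<in>R. c \<in> Y i}. b i * real (card {p\<in>P. A i p = 1 \<and> \<sigma> i p = c})) * infdist c C
          = (\<Sum>i\<in>R. if c \<in> Y i then b i * real (card {p\<in>Q i. \<sigma> i p = c}) * infdist c C else 0)" .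
    qed
    also have "\<dots> = (\<Sum>i\<in>R. \<Sum>c\<in>(\<Union>i\<in>R. Y i). if c \<in> Y i then b i * real (card {p\<in>Q i. \<sigma> i p = c}) * infdist c C else 0)"
      by (rule sum.swap)
    also have "\<dots> = (\<Sum>i\<in>R. b i * (\<Sum>p\<in>Q i. infdist (\<sigma> i p) C))"
    proof (rule sum.cong[OF refl])
      fix i assume iR: "i \<in> R"
      have "(\<Sum>c\<in>(\<Union>i\<in>R. Y i). if c \<in> Y i then b i * real (card {p\<in>Q i. \<sigma> i p = c}) * infdist c C else 0)
          = (\<Sum>c\<in>Y i. b i * real (card {p\<in>Q i. \<sigma> i p = c}) * infdist c C)"
        using finU iR by (simp add: sum.inter_filter[symmetric]) (intro sum.cong; auto)
      also have "\<dots> = b i * (\<Sum>c\<in>Y i. real (card {p\<in>Q i. \<sigma> i p = c}) * infdist c C)"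
        by (simp add: sum_distrib_left mult.assoc)
      also have "(\<Sum>c\<in>Y i. real (card {p\<in>Q i. \<sigma> i p = c}) * infdist c C) = (\<Sum>p\<in>Q i. infdist (\<sigma> i p) C)"
      proof -
        have "\<sigma> i ` Q i \<subseteq> Y i" using \<sigma> iR unfolding Q_def by auto
        from group_count[where g="\<sigma> i" and f="\<lambda>c. infdist c C", OF finQ[of i] finY[OF iR] this]
        show ?thesis by simp
      qed
      finally show "(\<Sum>c\<in>(\<Union>i\<in>R. Y i). if c \<in> Y i then b i * real (card {p\<in>Q i. \<sigma> i p = c}) * infdist c C else 0)
          = b i * (\<Sum>p\<in>Q i. infdist (\<sigma> i p) C)" .
    qed
    finally show ?thesis .
  qed
  have swapP: "(\<Sum>i\<in>R. b i * (\<Sum>p\<in>Q i. infdist p C)) = (\<Sum>p\<in>P. infdist p C * (\<Sum>i\<in>R. b i * A i p))"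
  proof -
    have "(\<Sum>i\<in>R. b i * (\<Sum>p\<in>Q i. infdist p C)) = (\<Sum>i\<in>R. b i * (\<Sum>p\<in>P. A i p * infdist p C))"
      unfolding Q_def using sum_restrict01[OF finP A01'] by (intro sum.cong) auto
    also have "\<dots> = (\<Sum>i\<in>R. \<Sum>p\<in>P. b i * A i p * infdist p C)"
      by (simp add: sum_distrib_left mult.assoc)
    also have "\<dots> = (\<Sum>p\<in>P. \<Sum>i\<in>R. b i * A i p * infdist p C)" by (rule sum.swap)
    also have "\<dots> = (\<Sum>p\<in>P. infdist p C * (\<Sum>i\<in>R. b i * A i p))"
      by (simp add: sum_distrib_left sum_distrib_right mult.commute mult.left_commute)
    finally show ?thesis .
  qed
  have lowP: "kmed_cost P C \<le> (\<Sum>i\<in>R. b i * (\<Sum>p\<in>Q i. infdist p C))"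
    unfolding swapP kmed_cost_def
  proof (rule sum_mono)
    fix p assume "p \<in> P"
    then have "1 \<le> (\<Sum>i\<in>R. b i * A i p)" using brec by blast
    then show "infdist p C \<le> infdist p C * (\<Sum>i\<in>R. b i * A i p)"
      using infdist_nonneg[of p C] by (metis mult.right_neutral mult_left_mono)
  qed
  have upP: "(\<Sum>i\<in>R. b i * (\<Sum>p\<in>Q i. infdist p C)) \<le> (1 + \<delta>) * kmed_cost P C"
    unfolding swapP unfolding kmed_cost_def sum_distrib_left[of "1 + \<delta>"]
  proof (rule sum_mono)
    fix p assume "p \<in> P"
    then have "(\<Sum>i\<in>R. b i * A i p) \<le> 1 + \<delta>" using brec by blast
    then show "infdist p C * (\<Sum>i\<in>R. b i * A i p) \<le> (1 + \<delta>) * infdist p C"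
      using infdist_nonneg[of p C] by (metis mult.commute mult_left_mono)
  qed
  have lower: "kmed_cost P C - (\<Sum>i\<in>R. b i * kmed_cost (Q i) (Y i)) \<le> kmed_wcost (\<Union>i\<in>R. Y i) C w"
  proof -
    have "(\<Sum>i\<in>R. b i * (\<Sum>p\<in>Q i. infdist p C)) - (\<Sum>i\<in>R. b i * kmed_cost (Q i) (Y i))
        = (\<Sum>i\<in>R. b i * (\<Sum>p\<in>Q i. infdist p C - infdist p (Y i)))"
      unfolding kmed_cost_def sum_subtractf[symmetric] right_diff_distrib
      by (intro sum.cong refl) (simp add: sum_subtractf right_diff_distrib)
    also have "\<dots> \<le> (\<Sum>i\<in>R. b i * (\<Sum>p\<in>Q i. infdist (\<sigma> i p) C))"
    proof (rule sum_mono)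
      fix i assume iR: "i \<in> R"
      have "(\<Sum>p\<in>Q i. infdist p C - infdist p (Y i)) \<le> (\<Sum>p\<in>Q i. infdist (\<sigma> i p) C)"
      proof (rule sum_mono)
        fix p assume "p \<in> Q i"
        then have "dist p (\<sigma> i p) = infdist p (Y i)" using \<sigma> iR unfolding Q_def by blast
        then show "infdist p C - infdist p (Y i) \<le> infdist (\<sigma> i p) C"
          using infdist_triangle[of p C "\<sigma> i p"] by simp
      qed
      then show "b i * (\<Sum>p\<in>Q i. infdist p C - infdist p (Y i)) \<le> b i * (\<Sum>p\<in>Q i. infdist (\<sigma> i p) C)"
        using bnn iR by (simp add: mult_left_mono)
    qed
    finally show ?thesis using key lowP by linarith
  qed
  have upper: "kmed_wcost (\<Union>i\<in>R. Y i) C w \<le> 2 * (1 + \<delta>) * kmed_cost P C"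
  proof -
    have "(\<Sum>i\<in>R. b i * (\<Sum>p\<in>Q i. infdist (\<sigma> i p) C)) \<le> (\<Sum>i\<in>R. b i * (2 * (\<Sum>p\<in>Q i. infdist p C)))"
    proof (rule sum_mono)
      fix i assume iR: "i \<in> R"
      have "(\<Sum>p\<in>Q i. infdist (\<sigma> i p) C) \<le> (\<Sum>p\<in>Q i. infdist p C + infdist p (Y i))"
      proof (rule sum_mono)
        fix p assume "p \<in> Q i"
        then have "dist p (\<sigma> i p) = infdist p (Y i)" using \<sigma> iR unfolding Q_def by blast
        then show "infdist (\<sigma> i p) C \<le> infdist p C + infdist p (Y i)"
          using infdist_triangle[of "\<sigma> i p" C p] by (simp add: dist_commute)
      qed
      also have "\<dots> = (\<Sum>p\<in>Q i. infdist p C) + kmed_cost (Q i) (Y i)"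
        unfolding kmed_cost_def by (simp add: sum.distrib)
      also have "kmed_cost (Q i) (Y i) \<le> kmed_cost (Q i) C"
        using Yopt iR Ccard unfolding Q_def by blast
      finally have "(\<Sum>p\<in>Q i. infdist (\<sigma> i p) C) \<le> 2 * (\<Sum>p\<in>Q i. infdist p C)"
        unfolding kmed_cost_def by simp
      then show "b i * (\<Sum>p\<in>Q i. infdist (\<sigma> i p) C) \<le> b i * (2 * (\<Sum>p\<in>Q i. infdist p C))"
        using bnn iR by (simp add: mult_left_mono)
    qed
    also have "\<dots> = 2 * (\<Sum>i\<in>R. b i * (\<Sum>p\<in>Q i. infdist p C))"
      by (simp add: sum_distrib_left mult.left_commute)
    finally show ?thesis using key upP by linarith
  qed
  show ?thesis using lower upper unfolding Q_def w_def by blast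
qed

end
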